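(* Fix an integer $k\ge2$. Consider real variables $\{d_{u,i}\}_{i\in[k]}$ and $\{d_{v,i}\}_{i\in[k]}$ subject to the constraints (1) $0\le d_{w,i}\le1$ for all $w\in\{u,v\}$, $i\in[k]$, and (2) $\sum_{i\in[k]}d_{w,i}=k-1$ for each $w\in\{u,v\}$. Then for any fixed feasible values $\{d^*_{u,i}\}_{i\in[k]}$, $\{d^*_{v,i}\}_{i\in[k]}$, there exist vectors $a_u,a_v\in\mathbb{R}^k$ with $\|a_u\|_2\le\sqrt{k/2}$ and $\|a_v\|_2\le\sqrt{k/2}$ such that, over all feasible values of the variables, the expression $$\sum_{i\in[k]}a_{u,i}d_{u,i}+\sum_{i\in[k]}a_{v,i}d_{v,i}+\frac12\sum_{i\in[k]}|d_{u,i}-d_{v,i}|$$ attains its minimum value at $\{d^*_{u,i}\}$, $\{d^*_{v,i}\}$ (not necessarily uniquely). *)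

theory Defs
  imports "HOL-Analysis.Analysis"
begin

text \<open>Vectors in R^k are represented as functions nat => real, indexed by {..<k}
 (i.e. [k] = {0,...,k-1}); only values at indices < k matter.\<close>

definition feasible :: "nat \<Rightarrow> (nat \<Rightarrow> real) \<Rightarrow> bool" where
  "feasible k d \<longleftrightarrow> (\<forall>i<k. 0 \<le> d i \<and> d i \<le> 1) \<and> (\<Sum>i<k. d i) = real k - 1"

definition l2norm :: "nat \<Rightarrow> (nat \<Rightarrow> real) \<Rightarrow> real" where
  "l2norm k a = sqrt (\<Sum>i<k. (a i)\<^sup>2)"

definition objective :: "nat \<Rightarrow> (nat \<Rightarrow> real) \<Rightarrow> (nat \<Rightarrow> real) \<Rightarrow> (nat \<Rightarrow> real) \<Rightarrow> (nat \<Rightarrow> real) \<Rightarrow> real" where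
  "objective k au av du dv =
     (\<Sum>i<k. au i * du i) + (\<Sum>i<k. av i * dv i) + (1/2) * (\<Sum>i<k. \<bar>du i - dv i\<bar>)"

end

theory Submission
  imports Defs
begin

lemma obj_eq:
  "objective k (\<lambda>i. - s i / 2) (\<lambda>i. s i / 2) du dv =
     (1/2) * (\<Sum>i<k. \<bar>du i - dv i\<bar> - s i * (du i - dv i))"
proof -
  have "objective k (\<lambda>i. - s i / 2) (\<lambda>i. s i / 2) du dv =
     (\<Sum>i<k. - s i / 2 * du i + s i / 2 * dv i + (1/2) * \<bar>du i - dv i\<bar>)"
    unfolding objective_def by (simp add: sum.distrib sum_distrib_left sum_subtractf sum_negf)
  also have "\<dots> = (\<Sum>i<k. (1/2) * (\<bar>du i - dv i\<bar> - s i * (du i - dv i)))"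
    by (rule sum.cong) (auto simp: algebra_simps)
  finally show ?thesis by (simp add: sum_distrib_left)
qed

theorem lemma4p4:
  fixes k :: nat and du' dv' :: "nat \<Rightarrow> real"
  assumes "k \<ge> 2"
    and "feasible k du'" and "feasible k dv'"
  shows "\<exists>au av :: nat \<Rightarrow> real.
           l2norm k au \<le> sqrt (real k / 2) \<and> l2norm k av \<le> sqrt (real k / 2) \<and>
           (\<forall>du dv. feasible k du \<longrightarrow> feasible k dv \<longrightarrow>
              objective k au av du' dv' \<le> objective k au av du dv)"
proof -
  define s where "s i = sgn (du' i - dv' i)" for i
  have sb: "(s i / 2)\<^sup>2 \<le> 1/2" for i
    unfolding s_def by (auto simp: sgn_real_def power2_eq_square)
  have n1: "(\<Sum>i<k. (s i / 2)\<^sup>2) \<le> real k / 2"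
    using sum_mono[of "{..<k}" "\<lambda>i. (s i / 2)\<^sup>2" "\<lambda>_. 1/2"] sb by simp
  have n2: "(\<Sum>i<k. (- s i / 2)\<^sup>2) \<le> real k / 2" using n1 by simp
  have z: "objective k (\<lambda>i. - s i / 2) (\<lambda>i. s i / 2) du' dv' = 0"
    unfolding obj_eq s_def by (simp add: abs_sgn)
  have p: "objective k (\<lambda>i. - s i / 2) (\<lambda>i. s i / 2) du dv \<ge> 0" for du dv
  proof -
    have "\<bar>du i - dv i\<bar> - s i * (du i - dv i) \<ge> 0" for i
    proof -
      have "\<bar>s i\<bar> \<le> 1" unfolding s_def by (simp add: sgn_real_def)
      hence "\<bar>s i * (du i - dv i)\<bar> \<le> \<bar>du i - dv i\<bar>"
        by (simp add: abs_mult mult_left_le_one_le)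
      thus ?thesis by linarith
    qed
    thus ?thesis unfolding obj_eq by (simp add: sum_nonneg)
  qed
  show ?thesis
    apply (rule exI[of _ "\<lambda>i. - s i / 2"], rule exI[of _ "\<lambda>i. s i / 2"])
    using n1 n2 z p unfolding l2norm_def by (auto intro: real_sqrt_le_mono)
qed

end
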